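(* Let $n\ge4$. The set $\mathbb{CPI}^n_S$ of closed path independent graphs in $\mathbb G^n_S$ is an $n$-dimensional linear subspace of $\mathbb G^n_S\cong\mathbb R^{\binom n2}$, and $\{\mathbf B^n_j\}_{j=1}^n$ is a basis of it, where $\mathbf B^n_j$ is the vector with $d_{j,k}=1$ for all $k\ne j$ and all other entries $0$.
   Context: $\mathbb G^n_S$ is the space of complete undirected weighted graphs without loops on $V_1,\dots,V_n$ with edge weights $d_{i,j}=d_{j,i}$, identified with $\mathbb R^{\binom n2}$ via the entries $d_{i,j}$, $i<j$. A closed path through a set $D$ ($|D|\ge3$) is a closed path visiting each $V_j$, $j\in D$, exactly once and no other vertex; its length is the sum of its edge weights. A graph is closed path independent iff for every such $D$ all closed paths through $D$ have the same length. *)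

theory Defs
  imports "HOL-Analysis.Analysis"
begin

text \<open>Vertices V_1..V_n are the elements of a finite type 'n with CARD('n) = n.
A weighted graph is a matrix d :: real^'n^'n; the space G^n_S consists of the
symmetric matrices with zero diagonal (diagonal = no loops), a linear space
isomorphic to R^(n choose 2) via the entries d_{i,j}, i<j.\<close>

definition graph_space :: "(real^'n^'n) set" where
  "graph_space = {d. (\<forall>i j. d$i$j = d$j$i) \<and> (\<forall>i. d$i$i = 0)}"

text \<open>A closed path through D: cyclic sequence of the distinct vertices of D,
each visited exactly once; given as a list p with V_{p!0} -> ... -> V_{p!(k-1)} -> V_{p!0}.\<close>

definition closed_path_through :: "'n set \<Rightarrow> 'n list \<Rightarrow> bool" where
  "closed_path_through D p \<longleftrightarrow> distinct p \<and> set p = D"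

definition closed_path_length :: "real^'n^'n \<Rightarrow> 'n list \<Rightarrow> real" where
  "closed_path_length d p =
     (\<Sum>i<length p. d $ (p ! i) $ (p ! ((i + 1) mod length p)))"

definition closed_path_independent :: "real^'n^'n \<Rightarrow> bool" where
  "closed_path_independent d \<longleftrightarrow>
     (\<forall>D p q. card D \<ge> 3 \<and> closed_path_through D p \<and> closed_path_through D q
        \<longrightarrow> closed_path_length d p = closed_path_length d q)"

definition CPI :: "(real^'n^'n) set" where
  "CPI = {d \<in> graph_space. closed_path_independent d}"

definition Bvec :: "'n \<Rightarrow> real^'n^'n" where
  "Bvec j = (\<chi> i k. if i \<noteq> k \<and> (i = j \<or> k = j) then 1 else 0)"

end

theory Submission
  imports Defs
begin

definition G :: "('n \<Rightarrow> real) \<Rightarrow> real^'n^'n" where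
  "G c = (\<chi> i k. if i \<noteq> k then c i + c k else 0)"

lemma sum_Bvec: "(\<Sum>j\<in>UNIV. c j *\<^sub>R (Bvec j :: real^'n::finite^'n)) = G c"
proof -
  have "(\<Sum>j\<in>UNIV. c j * (if i \<noteq> k \<and> (i = j \<or> k = j) then 1 else 0)) = (if i \<noteq> k then c i + c k else 0)"
    for i k :: 'n
  proof (cases "i = k")
    case False
    have "(\<Sum>j\<in>UNIV. c j * (if i \<noteq> k \<and> (i = j \<or> k = j) then 1 else 0))
        = (\<Sum>j\<in>UNIV. (if j = i then c j else 0) + (if j = k then c j else 0))"
      by (rule sum.cong) (use False in auto)
    also have "\<dots> = c i + c k" by (simp add: sum.distrib)
    finally show ?thesis using False by simp
  qed simp
  then show ?thesis
    unfolding G_def Bvec_def by (simp add: vec_eq_iff sum_component)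
qed

lemma modsuc: "i < (L::nat) \<Longrightarrow> Suc i mod L = (if Suc i = L then 0 else Suc i)"
  by auto

lemma shift_sum:
  fixes f :: "nat \<Rightarrow> real"
  assumes "L > 0"
  shows "(\<Sum>i<L. f ((i + 1) mod L)) = (\<Sum>i<L. f i)"
proof -
  have "(\<Sum>i<L. f ((i + 1) mod L)) = (\<Sum>i\<in>(\<lambda>i. (i+1) mod L) ` {..<L}. f i)"
  proof (rule sum.reindex[symmetric, unfolded comp_def])
    show "inj_on (\<lambda>i. (i + 1) mod L) {..<L}"
      unfolding inj_on_def by (auto simp: modsuc split: if_splits)
  qed
  also have "(\<lambda>i. (i+1) mod L) ` {..<L} = {..<L}"
  proof
    show "(\<lambda>i. (i+1) mod L) ` {..<L} \<subseteq> {..<L}" using assms by auto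
    show "{..<L} \<subseteq> (\<lambda>i. (i+1) mod L) ` {..<L}"
    proof
      fix j assume j: "j \<in> {..<L}"
      show "j \<in> (\<lambda>i. (i+1) mod L) ` {..<L}"
      proof (cases j)
        case 0 then show ?thesis using assms
          by (intro image_eqI[of _ _ "L - 1"]) auto
      next
        case (Suc m) then show ?thesis using j
          by (intro image_eqI[of _ _ m]) auto
      qed
    qed
  qed
  finally show ?thesis .
qed

lemma G_in_CPI: "G (c::'n::finite \<Rightarrow> real) \<in> CPI"
proof -
  have "closed_path_length (G c) p = 2 * sum c (set p)" if "distinct p" "length p \<ge> 2" for p :: "'n list"
  proof -
    let ?L = "length p"
    have ne: "p ! i \<noteq> p ! ((i + 1) mod ?L)" if "i < ?L" for i
    proof -
      have "(i + 1) mod ?L \<noteq> i" using that \<open>?L \<ge> 2\<close> by (simp add: modsuc)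
      moreover have "(i + 1) mod ?L < ?L" using that by (auto simp add: modsuc)
      ultimately show ?thesis using \<open>distinct p\<close> that by (simp add: nth_eq_iff_index_eq)
    qed
    have "closed_path_length (G c) p = (\<Sum>i<?L. c (p ! i) + c (p ! ((i + 1) mod ?L)))"
      unfolding closed_path_length_def G_def using ne by (intro sum.cong) auto
    also have "\<dots> = (\<Sum>i<?L. c (p ! i)) + (\<Sum>i<?L. c (p ! i))"
      proof -
      have "?L > 0" using that by auto
      from shift_sum[OF this, of "\<lambda>i. c (p ! i)"] show ?thesis by (simp add: sum.distrib)
    qed
    also have "(\<Sum>i<?L. c (p ! i)) = sum c (set p)"
      using that by (simp add: sum.distinct_set_conv_list sum_list_sum_nth atLeast0LessThan)
    finally show ?thesis by simp
  qed
  moreover have "length p \<ge> 2" if "closed_path_through D p" "card D \<ge> 3" for D p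
    using that unfolding closed_path_through_def using distinct_card[of p] by auto
  ultimately have "closed_path_independent (G c)"
    unfolding closed_path_independent_def closed_path_through_def
    by (metis (no_types))
  moreover have "G c \<in> graph_space"
    unfolding graph_space_def G_def by (auto simp: add.commute)
  ultimately show ?thesis unfolding CPI_def by auto
qed


lemma exists_other2:
  assumes "CARD('n::finite) \<ge> 3"
  shows "\<exists>k::'n. k \<noteq> i \<and> k \<noteq> j"
proof (rule ccontr)
  assume "\<not> ?thesis"
  then have "UNIV \<subseteq> {i, j}" by auto
  then have "CARD('n) \<le> card {i, j}" by (intro card_mono) auto
  also have "\<dots> \<le> 2" by (simp add: card_insert_if)
  finally show False using assms by simp
qed

lemma cpl4: "closed_path_length d [a, b, c, e] = d$a$b + d$b$c + d$c$e + d$e$a"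
proof -
  have "{..<4::nat} = {0,1,2,3}" by auto
  then show ?thesis unfolding closed_path_length_def by simp
qed

lemma four_point:
  assumes "d \<in> CPI" and "distinct [a, b, c, e]"
  shows "d$a$b + d$c$e = d$a$c + d$b$e"
proof -
  have sym: "\<And>i j. d$i$j = d$j$i" using assms(1) unfolding CPI_def graph_space_def by auto
  have ind: "closed_path_independent d" using assms(1) unfolding CPI_def by auto
  let ?D = "{a, b, c, e}"
  have "card ?D \<ge> 3" using assms(2) by auto
  moreover have "closed_path_through ?D [a, b, c, e]" "closed_path_through ?D [a, c, b, e]"
    using assms(2) unfolding closed_path_through_def by auto
  ultimately have "closed_path_length d [a, b, c, e] = closed_path_length d [a, c, b, e]"
    using ind unfolding closed_path_independent_def by blast
  then have "d$a$b + d$b$c + d$c$e + d$e$a = d$a$c + d$c$b + d$b$e + d$e$a"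
    by (simp add: cpl4)
  then show ?thesis using sym[of c b] by simp
qed


definition ff :: "real^'n^'n \<Rightarrow> 'n \<Rightarrow> 'n \<Rightarrow> 'n \<Rightarrow> real" where
  "ff d i j k = d$i$j + d$i$k - d$j$k"

lemma ff_sym: "d \<in> CPI \<Longrightarrow> ff d i j k = ff d i k j"
  unfolding ff_def CPI_def graph_space_def by auto

lemma ff_shift:
  assumes "d \<in> CPI" "distinct [i, j, k]" "k' \<noteq> i" "k' \<noteq> j"
  shows "ff d i j k = ff d i j k'"
proof (cases "k' = k")
  case False
  have sym: "\<And>x y. d$x$y = d$y$x" using assms(1) unfolding CPI_def graph_space_def by auto
  have "d$i$k + d$k'$j = d$i$k' + d$k$j"
    using four_point[OF assms(1), of i k k' j] assms False by auto
  then show ?thesis unfolding ff_def using sym[of k' j] sym[of k j] by simp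
qed simp

lemma ff_indep:
  assumes "d \<in> CPI" "distinct [i, j, k]" "distinct [i, j', k']"
  shows "ff d i j k = ff d i j' k'"
proof (cases "j' = k")
  case True
  have "ff d i j k = ff d i k j" using ff_sym[OF assms(1)] .
  also have "\<dots> = ff d i k k'" using ff_shift[OF assms(1), of i k j k'] assms True by auto
  finally show ?thesis using True by simp
next
  case False
  show ?thesis
  proof (cases "j' = j")
    case True
    then show ?thesis using ff_shift[OF assms(1), of i j k k'] assms by auto
  next
    case False2: False
    have "ff d i j k = ff d i k j" using ff_sym[OF assms(1)] .
    also have "\<dots> = ff d i k j'" using ff_shift[OF assms(1), of i k j j'] assms False False2 by auto
    also have "\<dots> = ff d i j' k" using ff_sym[OF assms(1)] .
    also have "\<dots> = ff d i j' k'" using ff_shift[OF assms(1), of i j' k k'] assms False False2 by auto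
    finally show ?thesis .
  qed
qed

lemma CPI_is_G:
  assumes "CARD('n::finite) \<ge> 3" "(d :: real^'n^'n) \<in> CPI"
  shows "d = G (\<lambda>i. ff d i (SOME j. j \<noteq> i) (SOME k. k \<noteq> i \<and> k \<noteq> (SOME j. j \<noteq> i)) / 2)"
proof -
  have sym: "\<And>x y. d$x$y = d$y$x" and diag: "\<And>x. d$x$x = 0"
    using assms(2) unfolding CPI_def graph_space_def by auto
  define J where "J i = (SOME j. j \<noteq> i)" for i :: 'n
  define K where "K i = (SOME k. k \<noteq> i \<and> k \<noteq> J i)" for i :: 'n
  have JK: "distinct [i, J i, K i]" for i
  proof -
    have "J i \<noteq> i" unfolding J_def using someI_ex[OF exists_other2[OF assms(1), of i i]] by auto
    moreover have "K i \<noteq> i \<and> K i \<noteq> J i" unfolding K_def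
      using someI_ex[OF exists_other2[OF assms(1), of i "J i"]] .
    ultimately show ?thesis by auto
  qed
  have "d$i$l = ff d i (J i) (K i) / 2 + ff d l (J l) (K l) / 2" if "i \<noteq> l" for i l
  proof -
    obtain k where k: "k \<noteq> i" "k \<noteq> l" using exists_other2[OF assms(1)] by blast
    have "ff d i (J i) (K i) = ff d i l k" using ff_indep[OF assms(2) JK[of i], of l k] k that by auto
    moreover have "ff d l (J l) (K l) = ff d l i k" using ff_indep[OF assms(2) JK[of l], of i k] k that by auto
    ultimately show ?thesis unfolding ff_def using sym[of l i] sym[of l k] sym[of i k] by (simp add: field_simps)
  qed
  then show ?thesis unfolding G_def J_def[symmetric] K_def[symmetric]
    by (auto simp: vec_eq_iff diag)
qed


lemma G_zero:
  assumes "CARD('n::finite) \<ge> 3" "G (c :: 'n \<Rightarrow> real) = 0"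
  shows "c i = 0"
proof -
  obtain j where j: "j \<noteq> i" using exists_other2[OF assms(1), of i i] by blast
  obtain k where k: "k \<noteq> i" "k \<noteq> j" using exists_other2[OF assms(1), of i j] by blast
  have "G c $ i $ j = 0" "G c $ i $ k = 0" "G c $ j $ k = 0" using assms(2) by auto
  then show ?thesis using j k unfolding G_def by auto
qed

lemma inj_Bvec:
  assumes "CARD('n::finite) \<ge> 3"
  shows "inj (Bvec :: 'n \<Rightarrow> real^'n^'n)"
proof
  fix i j :: 'n assume eq: "Bvec i = Bvec j"
  show "i = j"
  proof (rule ccontr)
    assume ij: "i \<noteq> j"
    obtain k where k: "k \<noteq> i" "k \<noteq> j" using exists_other2[OF assms] by blast
    have "(Bvec i :: real^'n^'n) $ i $ k = Bvec j $ i $ k" using eq by simp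
    then show False using ij k unfolding Bvec_def by auto
  qed
qed

lemma sum_range_Bvec:
  assumes "CARD('n::finite) \<ge> 3"
  shows "(\<Sum>v\<in>range (Bvec :: 'n \<Rightarrow> real^'n^'n). u v *\<^sub>R v) = G (u \<circ> Bvec)"
proof -
  have "(\<Sum>v\<in>range (Bvec :: 'n \<Rightarrow> real^'n^'n). u v *\<^sub>R v) = (\<Sum>j\<in>UNIV. u (Bvec j) *\<^sub>R Bvec j)"
    using sum.reindex[OF inj_Bvec[OF assms], of "\<lambda>v. u v *\<^sub>R v"] by simp
  also have "\<dots> = G (u \<circ> Bvec)" using sum_Bvec[of "u \<circ> Bvec"] by simp
  finally show ?thesis .
qed

lemma span_Bvec:
  assumes "CARD('n::finite) \<ge> 3"
  shows "span (range (Bvec :: 'n \<Rightarrow> real^'n^'n)) = range G"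
proof -
  have "span (range (Bvec :: 'n \<Rightarrow> real^'n^'n)) = range (\<lambda>u. G (u \<circ> Bvec))"
  proof -
    have "span (range (Bvec :: 'n \<Rightarrow> real^'n^'n)) = range (\<lambda>u. \<Sum>v\<in>range (Bvec :: 'n \<Rightarrow> real^'n^'n). u v *\<^sub>R v)"
      by (rule span_finite) simp
    then show ?thesis by (simp add: sum_range_Bvec[OF assms])
  qed
  also have "\<dots> = range G"
  proof (rule set_eqI)
    fix x :: "real^'n^'n"
    show "x \<in> range (\<lambda>u. G (u \<circ> (Bvec :: 'n \<Rightarrow> real^'n^'n))) \<longleftrightarrow> x \<in> range G"
    proof
      assume "x \<in> range (\<lambda>u. G (u \<circ> (Bvec :: 'n \<Rightarrow> real^'n^'n)))"
      then show "x \<in> range G" by auto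
    next
      assume "x \<in> range G"
      then obtain c where x: "x = G c" by auto
      have "(\<lambda>v. c (inv (Bvec :: 'n \<Rightarrow> real^'n^'n) v)) \<circ> Bvec = c" using inv_f_f[OF inj_Bvec[OF assms]] by (auto simp: fun_eq_iff)
      then have "x = G ((\<lambda>v. c (inv (Bvec :: 'n \<Rightarrow> real^'n^'n) v)) \<circ> Bvec)" using x by simp
      then show "x \<in> range (\<lambda>u. G (u \<circ> (Bvec :: 'n \<Rightarrow> real^'n^'n)))"
        by (intro image_eqI[where x = "\<lambda>v. c (inv (Bvec :: 'n \<Rightarrow> real^'n^'n) v)"]) simp_all
    qed
  qed
  finally show ?thesis .
qed

lemma indep_Bvec:
  assumes "CARD('n::finite) \<ge> 3"
  shows "independent (range (Bvec :: 'n \<Rightarrow> real^'n^'n))"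
proof
  assume "dependent (range (Bvec :: 'n \<Rightarrow> real^'n^'n))"
  then obtain u where u: "\<exists>v\<in>range (Bvec :: 'n \<Rightarrow> real^'n^'n). u v \<noteq> 0"
    "(\<Sum>v\<in>range (Bvec :: 'n \<Rightarrow> real^'n^'n). u v *\<^sub>R v) = 0"
    using dependent_finite[of "range (Bvec :: 'n \<Rightarrow> real^'n^'n)"] by auto
  from u(2) have "G (u \<circ> Bvec) = 0" by (simp add: sum_range_Bvec[OF assms])
  then have "\<And>i. (u \<circ> Bvec) i = 0" using G_zero[OF assms] by blast
  then show False using u(1) by auto
qed

theorem theorem9:
  assumes "CARD('n::finite) \<ge> 4"
  shows "subspace (CPI :: (real^'n^'n) set) \<and> CPI \<subseteq> (graph_space :: (real^'n^'n) set)
         \<and> dim (CPI :: (real^'n^'n) set) = CARD('n)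
         \<and> inj (Bvec :: 'n \<Rightarrow> real^'n^'n)
         \<and> independent (range (Bvec :: 'n \<Rightarrow> real^'n^'n))
         \<and> span (range (Bvec :: 'n \<Rightarrow> real^'n^'n)) = CPI"
proof -
  have a3: "CARD('n) \<ge> 3" using assms by simp
  have eq: "(CPI :: (real^'n^'n) set) = range G"
  proof
    show "(CPI :: (real^'n^'n) set) \<subseteq> range G" using CPI_is_G[OF a3] by blast
    show "range G \<subseteq> (CPI :: (real^'n^'n) set)" using G_in_CPI by blast
  qed
  have sp: "span (range (Bvec :: 'n \<Rightarrow> real^'n^'n)) = CPI" using span_Bvec[OF a3] eq by simp
  have ind: "independent (range (Bvec :: 'n \<Rightarrow> real^'n^'n))" using indep_Bvec[OF a3] .
  have "dim (CPI :: (real^'n^'n) set) = card (range (Bvec :: 'n \<Rightarrow> real^'n^'n))"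
    using dim_span_eq_card_independent[OF ind] sp by simp
  also have "\<dots> = CARD('n)" using card_image[OF inj_Bvec[OF a3]] by simp
  finally have dm: "dim (CPI :: (real^'n^'n) set) = CARD('n)" .
  have "subspace (CPI :: (real^'n^'n) set)" using subspace_span sp by metis
  moreover have "CPI \<subseteq> (graph_space :: (real^'n^'n) set)" unfolding CPI_def by auto
  ultimately show ?thesis using dm inj_Bvec[OF a3] ind sp by blast
qed

end
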